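(* Let $P,Q$ be probability distributions on the same finite sample space with $S(P\|Q)\le c$. Then for all $r>1$ there exist probability distributions $P',P''$ on that sample space such that $\|P-P'\|_1\le \frac{2}{r}$ and $Q=\alpha P'+(1-\alpha)P''$, where $\alpha:=\frac{r-1}{r\,2^{r(c+1)}}$.
   Context: $S(P\|Q):=\sum_i P(i)\log_2\frac{P(i)}{Q(i)}$ is the relative entropy, and $\|P-P'\|_1:=\sum_i|P(i)-P'(i)|$ is the total variation distance. *)

theory Defs
  imports "HOL-Analysis.Analysis" "HOL-Library.Extended_Real"
begin

definition is_distr :: "('a::finite \<Rightarrow> real) \<Rightarrow> bool" where
  "is_distr P \<longleftrightarrow> (\<forall>i. P i \<ge> 0) \<and> (\<Sum>i\<in>UNIV. P i) = 1"

definition rel_entropy :: "('a::finite \<Rightarrow> real) \<Rightarrow> ('a \<Rightarrow> real) \<Rightarrow> ereal" where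
  "rel_entropy P Q =
     (if \<exists>i. P i > 0 \<and> Q i = 0 then \<infinity>
      else ereal (\<Sum>i\<in>{i. P i > 0}. P i * log 2 (P i / Q i)))"

definition tv_norm :: "('a::finite \<Rightarrow> real) \<Rightarrow> ('a \<Rightarrow> real) \<Rightarrow> real" where
  "tv_norm P P' = (\<Sum>i\<in>UNIV. \<bar>P i - P' i\<bar>)"

end

theory Submission
  imports Defs
begin

lemma ln_ge_1_minus_inv: fixes x :: real assumes "x > 0" shows "ln x \<ge> 1 - 1/x"
proof -
  have "ln (1/x) \<le> 1/x - 1" using assms by (intro ln_le_minus_one) simp
  thus ?thesis using assms by (simp add: ln_div)
qed

lemma ln2_half: "ln (2::real) \<ge> 1/2"
  using ln_ge_1_minus_inv[of 2] by simp

lemma pt_lower: fixes p q :: real assumes "p > 0" "q > 0"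
  shows "p * log 2 (p/q) \<ge> - q"
proof -
  have "ln (2*p/q) \<ge> 1 - q/(2*p)" using ln_ge_1_minus_inv[of "2*p/q"] assms by simp
  hence "p * ln (2*p/q) \<ge> p * (1 - q/(2*p))" using assms by (intro mult_left_mono) auto
  hence "p * ln (2*p/q) \<ge> p - q/2" using assms by (simp add: right_diff_distrib)
  moreover have "ln (2*p/q) = ln 2 + ln (p/q)" using assms ln_mult[of 2 "p/q"] by (simp add: mult.assoc times_divide_eq_right)
  ultimately have A: "p * ln (p/q) \<ge> p*(1 - ln 2) - q/2" by (simp add: algebra_simps)
  have "p*(1 - ln 2) \<ge> 0" using ln_2_less_1 assms by simp
  hence B: "p * ln (p/q) \<ge> - q/2" using A by linarith
  have "p * log 2 (p/q) = (p * ln (p/q)) / ln 2" by (simp add: log_def)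
  also have "\<dots> \<ge> (-q/2) / ln 2" using B by (intro divide_right_mono) auto
  finally have C: "p * log 2 (p/q) \<ge> (-q/2)/ln 2" .
  have "(-q/2)/ln 2 \<ge> -q" using ln2_half assms by (simp add: field_simps)
  thus ?thesis using C by linarith
qed


theorem mainTheorem3:
  fixes P Q :: "'a::finite \<Rightarrow> real" and c r :: real
  assumes "is_distr P" and "is_distr Q"
    and "rel_entropy P Q \<le> ereal c"
    and "r > 1"
  shows "\<exists>P' P''. is_distr P' \<and> is_distr P'' \<and> tv_norm P P' \<le> 2 / r \<and>
     (let \<alpha> = (r - 1) / (r * 2 powr (r * (c + 1)))
      in \<forall>i. Q i = \<alpha> * P' i + (1 - \<alpha>) * P'' i)"
proof -
  have P0: "\<And>i. P i \<ge> 0" and P1: "(\<Sum>i\<in>UNIV. P i) = 1" using assms(1) by (auto simp: is_distr_def)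
  have Q0: "\<And>i. Q i \<ge> 0" and Q1: "(\<Sum>i\<in>UNIV. Q i) = 1" using assms(2) by (auto simp: is_distr_def)
  have noinf: "\<not> (\<exists>i. P i > 0 \<and> Q i = 0)"
    using assms(3) by (auto simp: rel_entropy_def split: if_splits)
  define A where "A = {i. P i > 0}"
  define f where "f i = P i * log 2 (P i / Q i)" for i
  have Sle: "(\<Sum>i\<in>A. f i) \<le> c"
    using assms(3) noinf by (simp add: rel_entropy_def A_def f_def)
  have QposA: "\<And>i. i \<in> A \<Longrightarrow> Q i > 0" using noinf Q0 unfolding A_def
    by (metis less_eq_real_def mem_Collect_eq)
  have flow: "\<And>i. i \<in> A \<Longrightarrow> f i \<ge> - Q i"
    unfolding f_def using QposA pt_lower by (auto simp: A_def)
  define K where "K = 2 powr (r * (c + 1))"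
  have Kpos: "K > 0" by (simp add: K_def)
  define B where "B = {i. P i > K * Q i}"
  define p where "p = (\<Sum>i\<in>B. P i)"
  have BA: "B \<subseteq> A" unfolding B_def A_def using Kpos Q0
    by (auto intro: less_le_trans[OF _ ] simp: ) (smt (verit) mult_nonneg_nonneg)
  have p0: "p \<ge> 0" unfolding p_def by (simp add: P0 sum_nonneg)
  have "(\<Sum>i\<in>A. f i) \<ge> (\<Sum>i\<in>A. - Q i)" by (intro sum_mono flow)
  moreover have "(\<Sum>i\<in>A. Q i) \<le> (\<Sum>i\<in>UNIV. Q i)" by (intro sum_mono2) (auto simp: Q0)
  ultimately have cge: "c \<ge> -1" using Sle Q1 by (simp add: sum_negf)
  have Kge1: "K \<ge> 1" unfolding K_def using cge assms(4) by (intro ge_one_powr_ge_zero) auto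
  have fB: "\<And>i. i \<in> B \<Longrightarrow> f i > P i * (r * (c + 1))"
  proof -
    fix i assume iB: "i \<in> B"
    hence Pi: "P i > 0" and Qi: "Q i > 0" using BA QposA by (auto simp: A_def)
    have "P i / Q i > K" using iB Qi by (simp add: B_def field_simps)
    hence "log 2 (P i / Q i) > log 2 K" using Kpos by (subst log_less_cancel_iff) auto
    moreover have "log 2 K = r * (c + 1)" by (simp add: K_def)
    ultimately show "f i > P i * (r * (c + 1))" unfolding f_def using Pi by simp
  qed
  have split: "(\<Sum>i\<in>A. f i) = (\<Sum>i\<in>A - B. f i) + (\<Sum>i\<in>B. f i)"
    using BA by (simp add: sum.subset_diff)
  have rest: "(\<Sum>i\<in>A - B. f i) \<ge> -1"
  proof -
    have "(\<Sum>i\<in>A - B. f i) \<ge> (\<Sum>i\<in>A - B. - Q i)" by (intro sum_mono flow) auto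
    moreover have "(\<Sum>i\<in>A - B. Q i) \<le> (\<Sum>i\<in>UNIV. Q i)" by (intro sum_mono2) (auto simp: Q0)
    ultimately show ?thesis using Q1 by (simp add: sum_negf)
  qed
  have rp: "r * p \<le> 1"
  proof (cases "B = {}")
    case True thus ?thesis by (simp add: p_def)
  next
    case False
    have "(\<Sum>i\<in>B. f i) > (\<Sum>i\<in>B. P i * (r * (c + 1)))"
      using False fB by (intro sum_strict_mono) auto
    hence "(\<Sum>i\<in>B. f i) > p * (r * (c + 1))" by (simp add: p_def sum_distrib_right)
    hence "c > p * (r * (c + 1)) - 1" using Sle split rest by linarith
    hence "(c + 1) * 1 > (c + 1) * (r * p)" by (simp add: algebra_simps)
    moreover have "c + 1 \<ge> 0" using cge by simp
    ultimately show ?thesis by (metis less_eq_real_def mult_less_cancel_left linorder_not_le mult_zero_left)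
  qed
  have plt: "p < 1" using rp assms(4) p0
    by (smt (verit, best) mult_less_cancel_right1)
  define G where "G = UNIV - B"
  have sumG: "(\<Sum>i\<in>G. P i) = 1 - p"
    using P1 sum.subset_diff[of B UNIV P] by (simp add: G_def p_def)
  define P' where "P' i = (if i \<in> B then 0 else P i / (1 - p))" for i
  have P'0: "\<And>i. P' i \<ge> 0" using P0 plt by (simp add: P'_def)
  have P'1: "(\<Sum>i\<in>UNIV. P' i) = 1"
  proof -
    have "(\<Sum>i\<in>UNIV. P' i) = (\<Sum>i\<in>G. P' i) + (\<Sum>i\<in>B. P' i)"
      using sum.subset_diff[of B UNIV P'] by (simp add: G_def)
    also have "(\<Sum>i\<in>B. P' i) = 0" by (simp add: P'_def)
    also have "(\<Sum>i\<in>G. P' i) = (\<Sum>i\<in>G. P i / (1 - p))" by (intro sum.cong) (auto simp: P'_def G_def)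
    also have "\<dots> = (1 - p) / (1 - p)" by (simp add: sum_divide_distrib[symmetric] sumG)
    finally show ?thesis using plt by simp
  qed
  have tv: "tv_norm P P' = 2 * p"
  proof -
    have "tv_norm P P' = (\<Sum>i\<in>G. \<bar>P i - P' i\<bar>) + (\<Sum>i\<in>B. \<bar>P i - P' i\<bar>)"
      unfolding tv_norm_def using sum.subset_diff[of B UNIV] by (simp add: G_def)
    also have "(\<Sum>i\<in>B. \<bar>P i - P' i\<bar>) = p" unfolding p_def by (intro sum.cong) (auto simp: P'_def P0)
    also have "(\<Sum>i\<in>G. \<bar>P i - P' i\<bar>) = (\<Sum>i\<in>G. P i * (p / (1 - p)))"
    proof (intro sum.cong refl)
      fix i assume "i \<in> G"
      hence "P' i = P i / (1 - p)" by (simp add: P'_def G_def)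
      moreover have "P i / (1 - p) - P i = P i * (p / (1 - p))" using plt by (simp add: field_simps)
      moreover have "P i * (p / (1 - p)) \<ge> 0" using P0 p0 plt by simp
      ultimately show "\<bar>P i - P' i\<bar> = P i * (p / (1 - p))" by simp
    qed
    also have "\<dots> = (\<Sum>i\<in>G. P i) * (p / (1 - p))" by (rule sum_distrib_right[symmetric])
    also have "\<dots> = p" using plt by (simp add: sumG)
    finally show ?thesis by simp
  qed
  define \<alpha> where "\<alpha> = (r - 1) / (r * 2 powr (r * (c + 1)))"
  have \<alpha>K: "\<alpha> = (r - 1) / (r * K)" by (simp add: \<alpha>_def K_def)
  have \<alpha>0: "\<alpha> > 0" using assms(4) Kpos by (simp add: \<alpha>K)
  have \<alpha>le: "\<alpha> \<le> (r - 1) / r"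
  proof -
    have "(K - 1) * (r * (r - 1)) \<ge> 0" using assms(4) Kge1 by simp
    thus ?thesis unfolding \<alpha>K using assms(4) Kge1 Kpos
      by (simp add: field_simps)
  qed
  have \<alpha>1: "\<alpha> < 1" using \<alpha>le assms(4) by (smt (verit) divide_less_eq_1_pos)
  have dom: "\<And>i. \<alpha> * P' i \<le> Q i"
  proof -
    fix i show "\<alpha> * P' i \<le> Q i"
    proof (cases "i \<in> B")
      case True thus ?thesis using Q0 by (simp add: P'_def)
    next
      case False
      hence PK: "P i \<le> K * Q i" by (simp add: B_def)
      have "\<alpha> * P' i = (r - 1) / r * (P i / K) / (1 - p)"
        using False by (simp add: P'_def \<alpha>K)
      also have "\<dots> \<le> (r - 1) / r * Q i / (1 - p)"
        using PK Kpos assms(4) plt by (intro divide_right_mono mult_left_mono) (auto simp: field_simps)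
      also have "\<dots> \<le> (1 - p) * Q i / (1 - p)"
      proof -
        have "(r - 1) / r \<le> 1 - p" using rp assms(4) by (simp add: field_simps)
        thus ?thesis using Q0[of i] plt by (intro divide_right_mono mult_right_mono) auto
      qed
      also have "\<dots> = Q i" using plt by simp
      finally show ?thesis .
    qed
  qed
  define P'' where "P'' i = (Q i - \<alpha> * P' i) / (1 - \<alpha>)" for i
  have P''0: "\<And>i. P'' i \<ge> 0" using dom \<alpha>1 by (simp add: P''_def)
  have P''1: "(\<Sum>i\<in>UNIV. P'' i) = 1"
  proof -
    have "(\<Sum>i\<in>UNIV. P'' i) = ((\<Sum>i\<in>UNIV. Q i) - \<alpha> * (\<Sum>i\<in>UNIV. P' i)) / (1 - \<alpha>)"
      by (simp add: P''_def sum_divide_distrib[symmetric] sum_subtractf sum_distrib_left)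
    thus ?thesis using Q1 P'1 \<alpha>1 by simp
  qed
  have dec: "\<forall>i. Q i = \<alpha> * P' i + (1 - \<alpha>) * P'' i" using \<alpha>1 by (simp add: P''_def)
  have "tv_norm P P' \<le> 2 / r" using tv rp assms(4) by (simp add: field_simps)
  thus ?thesis using P'0 P'1 P''0 P''1 dec
    by (intro exI[of _ P'] exI[of _ P'']) (simp add: is_distr_def \<alpha>_def Let_def)
qed

end
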